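(* For every state $\rho$ on $\mathbb{C}^M\otimes\mathbb{C}^N$ and all unitaries $U_1$ on $\mathbb{C}^M$ and $U_2$ on $\mathbb{C}^N$, $d_{\max}\big((U_1\otimes U_2)\rho(U_1\otimes U_2)^\dagger\big)=d_{\max}(\rho)$.
   Context: For a state $\rho$ on $\mathbb{C}^M\otimes\mathbb{C}^N$ let $\rho_B=\mathrm{Tr}_A(\rho)$. A unitary $U^B$ on $\mathbb{C}^N$ is called cyclic for $\rho$ if $[\rho_B,U^B]=0$. Set $\rho_f=(I\otimes U^B)\rho(I\otimes U^{B\dagger})$ and define the Fu distance $d(\rho,U^B)=\frac{1}{\sqrt2}\|\rho-\rho_f\|_F$ (Frobenius norm $\|X\|_F=\sqrt{\mathrm{Tr}(X^\dagger X)}$). Define $d_{\max}(\rho)=\max\{d(\rho,U^B): U^B \text{ unitary},\ [\rho_B,U^B]=0\}$. *)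

theory Defs
  imports "Jordan_Normal_Form.Matrix"
begin

definition dagger :: "complex mat \<Rightarrow> complex mat" where
  "dagger A = mat (dim_col A) (dim_row A) (\<lambda>(i,j). cnj (A $$ (j,i)))"

definition unitary :: "nat \<Rightarrow> complex mat \<Rightarrow> bool" where
  "unitary n U \<longleftrightarrow> U \<in> carrier_mat n n \<and> U * dagger U = 1\<^sub>m n \<and> dagger U * U = 1\<^sub>m n"

definition tr :: "complex mat \<Rightarrow> complex" where
  "tr A = (\<Sum>i<dim_row A. A $$ (i,i))"

(* Kronecker product, basis of C^M \<otimes> C^N indexed by i*N + k, i<M, k<N *)
definition kron :: "complex mat \<Rightarrow> complex mat \<Rightarrow> complex mat" where
  "kron A B = mat (dim_row A * dim_row B) (dim_col A * dim_col B)
     (\<lambda>(i,j). A $$ (i div dim_row B, j div dim_col B) * B $$ (i mod dim_row B, j mod dim_col B))"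

definition ptrace_A :: "nat \<Rightarrow> nat \<Rightarrow> complex mat \<Rightarrow> complex mat" where
  "ptrace_A M N \<rho> = mat N N (\<lambda>(k,l). \<Sum>i<M. \<rho> $$ (i*N + k, i*N + l))"

definition is_state :: "nat \<Rightarrow> nat \<Rightarrow> complex mat \<Rightarrow> bool" where
  "is_state M N \<rho> \<longleftrightarrow> \<rho> \<in> carrier_mat (M*N) (M*N) \<and> dagger \<rho> = \<rho> \<and>
     (\<forall>v \<in> carrier_vec (M*N). Re (v \<bullet>c (\<rho> *\<^sub>v v)) \<ge> 0 \<and> Im (v \<bullet>c (\<rho> *\<^sub>v v)) = 0) \<and>
     tr \<rho> = 1"

definition frob :: "complex mat \<Rightarrow> real" where
  "frob X = sqrt (\<Sum>i<dim_row X. \<Sum>j<dim_col X. (cmod (X $$ (i,j)))\<^sup>2)"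

definition fu_dist :: "nat \<Rightarrow> nat \<Rightarrow> complex mat \<Rightarrow> complex mat \<Rightarrow> real" where
  "fu_dist M N \<rho> UB =
     (let W = kron (1\<^sub>m M) UB in frob (\<rho> - W * \<rho> * dagger W) / sqrt 2)"

definition cyclic_unitary :: "nat \<Rightarrow> nat \<Rightarrow> complex mat \<Rightarrow> complex mat \<Rightarrow> bool" where
  "cyclic_unitary M N \<rho> UB \<longleftrightarrow> unitary N UB \<and>
     ptrace_A M N \<rho> * UB = UB * ptrace_A M N \<rho>"

(* d_max (the maximum is attained by compactness; written as a supremum) *)
definition d_max :: "nat \<Rightarrow> nat \<Rightarrow> complex mat \<Rightarrow> real" where
  "d_max M N \<rho> = Sup {fu_dist M N \<rho> UB | UB. cyclic_unitary M N \<rho> UB}"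

end

theory Submission
  imports Defs
begin


lemma sum_split_prod:
  fixes f :: "nat \<Rightarrow> 'a::comm_monoid_add"
  shows "(\<Sum>j<M*N. f j) = (\<Sum>a<M. \<Sum>b<N. f (a*N+b))"
proof (induction M)
  case 0 then show ?case by simp
next
  case (Suc M)
  have "(\<Sum>j<Suc M*N. f j) = (\<Sum>j<M*N. f j) + (\<Sum>j\<in>{M*N..<M*N+N}. f j)"
    by (simp add: lessThan_atLeast0 sum.atLeastLessThan_concat add.commute)
  also have "(\<Sum>j\<in>{M*N..<M*N+N}. f j) = (\<Sum>b<N. f (M*N+b))"
    using sum.shift_bounds_nat_ivl[of f 0 "M*N" N] by (simp add: lessThan_atLeast0 add.commute)
  finally show ?case using Suc by simp
qed

lemma dagger_carrier[simp]: "A \<in> carrier_mat m n \<Longrightarrow> dagger A \<in> carrier_mat n m"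
  by (auto simp: dagger_def)
lemma dagger_dims[simp]: "dim_row (dagger A) = dim_col A" "dim_col (dagger A) = dim_row A"
  by (auto simp: dagger_def)
lemma dagger_index[simp]: "i < dim_col A \<Longrightarrow> j < dim_row A \<Longrightarrow> dagger A $$ (i,j) = cnj (A $$ (j,i))"
  by (auto simp: dagger_def)
lemma dagger_dagger[simp]: "dagger (dagger A) = A"
  by (auto simp: dagger_def)
lemma dagger_one[simp]: "dagger (1\<^sub>m n) = 1\<^sub>m n"
  by (auto simp: dagger_def)
lemma dagger_mult: "A \<in> carrier_mat m n \<Longrightarrow> B \<in> carrier_mat n p \<Longrightarrow> dagger (A*B) = dagger B * dagger A"
  by (rule eq_matI) (auto simp: dagger_def scalar_prod_def mult.commute intro!: sum.cong)
lemma dagger_minus: "A \<in> carrier_mat m n \<Longrightarrow> B \<in> carrier_mat m n \<Longrightarrow> dagger (A-B) = dagger A - dagger B"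
  by (rule eq_matI) (auto simp: dagger_def)

lemma kron_carrier[simp]: "kron A B \<in> carrier_mat (dim_row A * dim_row B) (dim_col A * dim_col B)"
  by (auto simp: kron_def)
lemma kron_dims[simp]: "dim_row (kron A B) = dim_row A * dim_row B" "dim_col (kron A B) = dim_col A * dim_col B"
  by (auto simp: kron_def)
lemma kron_index: "i < dim_row A * dim_row B \<Longrightarrow> j < dim_col A * dim_col B \<Longrightarrow>
  kron A B $$ (i,j) = A $$ (i div dim_row B, j div dim_col B) * B $$ (i mod dim_row B, j mod dim_col B)"
  by (auto simp: kron_def)

lemma dagger_kron: "dagger (kron A B) = kron (dagger A) (dagger B)"
proof (rule eq_matI)
  fix i j assume "i < dim_row (kron (dagger A) (dagger B))" "j < dim_col (kron (dagger A) (dagger B))"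
  hence i: "i < dim_col A * dim_col B" and j: "j < dim_row A * dim_row B" by auto
  hence "dim_col B > 0" "dim_row B > 0" by (auto intro: Nat.gr0I)
  hence "i div dim_col B < dim_col A" "j div dim_row B < dim_row A" "i mod dim_col B < dim_col B" "j mod dim_row B < dim_row B"
    using i j by (auto simp: less_mult_imp_div_less)
  thus "dagger (kron A B) $$ (i, j) = kron (dagger A) (dagger B) $$ (i, j)"
    using i j by (simp add: kron_index)
qed auto

lemma kron_mult:
  assumes A: "A \<in> carrier_mat m1 n1" and B: "B \<in> carrier_mat m2 n2"
    and C: "C \<in> carrier_mat n1 p1" and D: "D \<in> carrier_mat n2 p2"
  shows "kron A B * kron C D = kron (A*C) (B*D)"
proof (rule eq_matI)
  fix i j assume i: "i < dim_row (kron (A*C) (B*D))" and j: "j < dim_col (kron (A*C) (B*D))"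
  have i': "i < m1*m2" and j': "j < p1*p2" using i j A B C D by auto
  hence m2: "m2 > 0" and p2: "p2 > 0" by (auto intro: Nat.gr0I)
  have id: "i div m2 < m1" "i mod m2 < m2" "j div p2 < p1" "j mod p2 < p2"
    using i' j' m2 p2 by (auto simp: less_mult_imp_div_less mult.commute)
  have "(kron A B * kron C D) $$ (i,j) = (\<Sum>k<n1*n2. kron A B $$ (i,k) * kron C D $$ (k,j))"
    using i' j' A B C D by (simp add: scalar_prod_def lessThan_atLeast0)
  also have "\<dots> = (\<Sum>a<n1. \<Sum>b<n2. kron A B $$ (i,a*n2+b) * kron C D $$ (a*n2+b,j))"
    by (rule sum_split_prod)
  also have "\<dots> = (\<Sum>a<n1. \<Sum>b<n2. (A $$ (i div m2, a) * C $$ (a, j div p2)) * (B $$ (i mod m2, b) * D $$ (b, j mod p2)))"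
  proof (intro sum.cong refl)
    fix a b assume a: "a \<in> {..<n1}" and b: "b \<in> {..<n2}"
    have "a*n2+b < (a+1)*n2" using b by simp
    also have "\<dots> \<le> n1*n2" using a by (intro mult_le_mono1) simp
    finally have ab: "a*n2+b < n1*n2" .
    show "kron A B $$ (i,a*n2+b) * kron C D $$ (a*n2+b,j) = (A $$ (i div m2, a) * C $$ (a, j div p2)) * (B $$ (i mod m2, b) * D $$ (b, j mod p2))"
      using A B C D i' j' ab a b by (simp add: kron_index)
  qed
  also have "\<dots> = (\<Sum>a<n1. A $$ (i div m2, a) * C $$ (a, j div p2)) * (\<Sum>b<n2. B $$ (i mod m2, b) * D $$ (b, j mod p2))"
    by (simp add: sum_product)
  also have "\<dots> = kron (A*C) (B*D) $$ (i,j)"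
    using A B C D i' j' id by (simp add: kron_index scalar_prod_def lessThan_atLeast0)
  finally show "(kron A B * kron C D) $$ (i, j) = kron (A * C) (B * D) $$ (i, j)" .
qed (use assms in auto)



lemma kron_mult_left_index:
  assumes A: "A \<in> carrier_mat m M" and B: "B \<in> carrier_mat N N" and Y: "Y \<in> carrier_mat (M*N) n"
    and i: "i < m" and k: "k < N" and c: "c < n"
  shows "(kron A B * Y) $$ (i*N+k, c) = (\<Sum>a<M. \<Sum>b<N. A$$(i,a) * B$$(k,b) * Y$$(a*N+b, c))"
proof -
  have "i*N+k < (i+1)*N" using k by simp
  also have "\<dots> \<le> m*N" using i by (intro mult_le_mono1) simp
  finally have ik: "i*N+k < m*N" .
  have "(kron A B * Y) $$ (i*N+k, c) = (\<Sum>j<M*N. kron A B $$ (i*N+k, j) * Y $$ (j,c))"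
    using A B Y ik c by (simp add: scalar_prod_def lessThan_atLeast0)
  also have "\<dots> = (\<Sum>a<M. \<Sum>b<N. kron A B $$ (i*N+k, a*N+b) * Y $$ (a*N+b,c))"
    by (rule sum_split_prod)
  also have "\<dots> = (\<Sum>a<M. \<Sum>b<N. A$$(i,a) * B$$(k,b) * Y$$(a*N+b, c))"
  proof (intro sum.cong refl)
    fix a b assume a: "a \<in> {..<M}" and b: "b \<in> {..<N}"
    have "a*N+b < (a+1)*N" using b by simp
    also have "\<dots> \<le> M*N" using a by (intro mult_le_mono1) simp
    finally have ab: "a*N+b < M*N" .
    show "kron A B $$ (i*N+k, a*N+b) * Y $$ (a*N+b,c) = A$$(i,a) * B$$(k,b) * Y$$(a*N+b, c)"
      using A B ab ik k b by (simp add: kron_index)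
  qed
  finally show ?thesis .
qed

lemma kron_mult_right_index:
  assumes A: "A \<in> carrier_mat M m" and B: "B \<in> carrier_mat N N" and Y: "Y \<in> carrier_mat n (M*N)"
    and j: "j < m" and l: "l < N" and r: "r < n"
  shows "(Y * kron A B) $$ (r, j*N+l) = (\<Sum>a<M. \<Sum>b<N. Y$$(r, a*N+b) * A$$(a,j) * B$$(b,l))"
proof -
  have "j*N+l < (j+1)*N" using l by simp
  also have "\<dots> \<le> m*N" using j by (intro mult_le_mono1) simp
  finally have jl: "j*N+l < m*N" .
  have "(Y * kron A B) $$ (r, j*N+l) = (\<Sum>k<M*N. Y $$ (r,k) * kron A B $$ (k, j*N+l))"
    using A B Y jl r by (simp add: scalar_prod_def lessThan_atLeast0)
  also have "\<dots> = (\<Sum>a<M. \<Sum>b<N. Y $$ (r,a*N+b) * kron A B $$ (a*N+b, j*N+l))"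
    by (rule sum_split_prod)
  also have "\<dots> = (\<Sum>a<M. \<Sum>b<N. Y$$(r, a*N+b) * A$$(a,j) * B$$(b,l))"
  proof (intro sum.cong refl)
    fix a b assume a: "a \<in> {..<M}" and b: "b \<in> {..<N}"
    have "a*N+b < (a+1)*N" using b by simp
    also have "\<dots> \<le> M*N" using a by (intro mult_le_mono1) simp
    finally have ab: "a*N+b < M*N" .
    show "Y $$ (r,a*N+b) * kron A B $$ (a*N+b, j*N+l) = Y$$(r, a*N+b) * A$$(a,j) * B$$(b,l)"
      using A B ab jl l b by (simp add: kron_index)
  qed
  finally show ?thesis .
qed



lemma one_delta0: "i < (M::nat) \<Longrightarrow> (\<Sum>a<M. (if a = i then 1 else 0) * (f a :: complex)) = f i"
proof -
  assume i: "i < M"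
  have "(\<Sum>a<M. (if a = i then 1 else 0) * f a) = (\<Sum>a<M. if a = i then f a else 0)"
    by (intro sum.cong) auto
  also have "\<dots> = f i" using i by (simp add: sum.delta)
  finally show ?thesis .
qed
lemma one_delta0': "i < (M::nat) \<Longrightarrow> (\<Sum>a<M. (if i = a then 1 else 0) * (f a :: complex)) = f i"
  using one_delta0[of i M f] by (simp add: eq_commute)
lemma one_delta1: "i < M \<Longrightarrow> (\<Sum>a<M. 1\<^sub>m M $$ (a,i) * (f a :: complex)) = f i"
  by (subst sum.cong[OF refl, of _ _ "\<lambda>a. (if a = i then 1 else 0) * f a"]) (auto simp: one_delta0)
lemma one_delta2: "i < M \<Longrightarrow> (\<Sum>a<M. 1\<^sub>m M $$ (i,a) * (f a :: complex)) = f i"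
  by (subst sum.cong[OF refl, of _ _ "\<lambda>a. (if i = a then 1 else 0) * f a"]) (auto simp: one_delta0')

lemma ptrace_carrier[simp]: "ptrace_A M N X \<in> carrier_mat N N"
  by (simp add: ptrace_A_def)

lemma ptrace_dims[simp]: "dim_row (ptrace_A M N X) = N" "dim_col (ptrace_A M N X) = N"
  by (auto simp add: ptrace_A_def)

lemma ptrace_index: "k < N \<Longrightarrow> l < N \<Longrightarrow> ptrace_A M N X $$ (k,l) = (\<Sum>i<M. X $$ (i*N + k, i*N + l))"
  by (simp add: ptrace_A_def)

lemma idx_lt: "i < M \<Longrightarrow> k < N \<Longrightarrow> i*N+k < M*(N::nat)"
proof -
  assume i: "i < M" and k: "k < N"
  have "i*N+k < (i+1)*N" using k by simp
  also have "\<dots> \<le> M*N" using i by (intro mult_le_mono1) simp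
  finally show ?thesis .
qed

lemma ptrace_L2:
  assumes Y: "Y \<in> carrier_mat (M*N) (M*N)" and B: "B \<in> carrier_mat N N" and C: "C \<in> carrier_mat N N"
  shows "ptrace_A M N (kron (1\<^sub>m M) B * Y * kron (1\<^sub>m M) C) = B * ptrace_A M N Y * C"
proof (rule eq_matI)
  fix k l assume "k < dim_row (B * ptrace_A M N Y * C)" "l < dim_col (B * ptrace_A M N Y * C)"
  hence k: "k < N" and l: "l < N" using B C by auto
  have KY: "kron (1\<^sub>m M) B * Y \<in> carrier_mat (M*N) (M*N)" using Y B by auto
  have "ptrace_A M N (kron (1\<^sub>m M) B * Y * kron (1\<^sub>m M) C) $$ (k,l)
     = (\<Sum>i<M. (kron (1\<^sub>m M) B * Y * kron (1\<^sub>m M) C) $$ (i*N+k, i*N+l))"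
    using k l by (simp add: ptrace_index)
  also have "\<dots> = (\<Sum>i<M. \<Sum>a<M. \<Sum>b<N. (kron (1\<^sub>m M) B * Y) $$ (i*N+k, a*N+b) * 1\<^sub>m M $$ (a,i) * C $$ (b,l))"
    using KY C k l idx_lt by (intro sum.cong refl kron_mult_right_index) auto
  also have "\<dots> = (\<Sum>i<M. \<Sum>b<N. (kron (1\<^sub>m M) B * Y) $$ (i*N+k, i*N+b) * C $$ (b,l))"
  proof (rule sum.cong[OF refl])
    fix i assume i: "i \<in> {..<M}"
    have "(\<Sum>a<M. \<Sum>b<N. (kron (1\<^sub>m M) B * Y) $$ (i*N+k, a*N+b) * 1\<^sub>m M $$ (a,i) * C $$ (b,l))
      = (\<Sum>a<M. 1\<^sub>m M $$ (a,i) * (\<Sum>b<N. (kron (1\<^sub>m M) B * Y) $$ (i*N+k, a*N+b) * C $$ (b,l)))"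
      by (simp add: sum_distrib_left mult_ac)
    also have "\<dots> = (\<Sum>b<N. (kron (1\<^sub>m M) B * Y) $$ (i*N+k, i*N+b) * C $$ (b,l))"
      using i by (intro one_delta1) simp
    finally show "(\<Sum>a<M. \<Sum>b<N. (kron (1\<^sub>m M) B * Y) $$ (i*N+k, a*N+b) * 1\<^sub>m M $$ (a,i) * C $$ (b,l))
      = (\<Sum>b<N. (kron (1\<^sub>m M) B * Y) $$ (i*N+k, i*N+b) * C $$ (b,l))" .
  qed
  also have "\<dots> = (\<Sum>i<M. \<Sum>b<N. (\<Sum>d<N. B $$ (k,d) * Y $$ (i*N+d, i*N+b)) * C $$ (b,l))"
  proof (rule sum.cong[OF refl], rule sum.cong[OF refl])
    fix i b assume i: "i \<in> {..<M}" and b: "b \<in> {..<N}"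
    have "(kron (1\<^sub>m M) B * Y) $$ (i*N+k, i*N+b) = (\<Sum>a<M. \<Sum>d<N. 1\<^sub>m M $$ (i,a) * B $$ (k,d) * Y $$ (a*N+d, i*N+b))"
      using Y B i b k idx_lt by (intro kron_mult_left_index) auto
    also have "\<dots> = (\<Sum>a<M. 1\<^sub>m M $$ (i,a) * (\<Sum>d<N. B $$ (k,d) * Y $$ (a*N+d, i*N+b)))"
      by (simp add: sum_distrib_left mult_ac)
    also have "\<dots> = (\<Sum>d<N. B $$ (k,d) * Y $$ (i*N+d, i*N+b))"
      using i by (intro one_delta2) simp
    finally show "(kron (1\<^sub>m M) B * Y) $$ (i*N+k, i*N+b) * C $$ (b,l) = (\<Sum>d<N. B $$ (k,d) * Y $$ (i*N+d, i*N+b)) * C $$ (b,l)"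
      by simp
  qed
  also have "\<dots> = (\<Sum>b<N. (\<Sum>d<N. B $$ (k,d) * (\<Sum>i<M. Y $$ (i*N+d, i*N+b))) * C $$ (b,l))"
    by (simp add: sum_distrib_left sum_distrib_right sum.swap[of _ "{..<M}"] mult_ac)
  also have "\<dots> = (\<Sum>b<N. (B * ptrace_A M N Y) $$ (k,b) * C $$ (b,l))"
  proof (rule sum.cong[OF refl])
    fix b assume b: "b \<in> {..<N}"
    have "(B * ptrace_A M N Y) $$ (k,b) = (\<Sum>d<N. B $$ (k,d) * ptrace_A M N Y $$ (d,b))"
      using B k b by (simp add: scalar_prod_def lessThan_atLeast0)
    also have "\<dots> = (\<Sum>d<N. B $$ (k,d) * (\<Sum>i<M. Y $$ (i*N+d, i*N+b)))"
      using b by (intro sum.cong refl) (simp add: ptrace_index)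
    finally show "(\<Sum>d<N. B $$ (k,d) * (\<Sum>i<M. Y $$ (i*N+d, i*N+b))) * C $$ (b,l) = (B * ptrace_A M N Y) $$ (k,b) * C $$ (b,l)" by simp
  qed
  also have "\<dots> = (B * ptrace_A M N Y * C) $$ (k,l)"
    using B C k l by (simp add: scalar_prod_def lessThan_atLeast0)
  finally show "ptrace_A M N (kron (1\<^sub>m M) B * Y * kron (1\<^sub>m M) C) $$ (k,l) = (B * ptrace_A M N Y * C) $$ (k,l)" .
qed (use B C in auto)

lemma unitary_col:
  assumes U: "U \<in> carrier_mat M M" and UU: "dagger U * U = 1\<^sub>m M" and a: "a < M" and c: "c < M"
  shows "(\<Sum>i<M. cnj (U $$ (i,a)) * U $$ (i,c)) = 1\<^sub>m M $$ (a,c)"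
proof -
  have "(dagger U * U) $$ (a,c) = (\<Sum>i<M. cnj (U $$ (i,a)) * U $$ (i,c))"
    using U a c by (simp add: scalar_prod_def lessThan_atLeast0)
  thus ?thesis using UU by simp
qed

lemma swap3: "(\<Sum>i\<in>A. \<Sum>a\<in>B. \<Sum>c\<in>C. f i a c) = (\<Sum>a\<in>B. \<Sum>c\<in>C. \<Sum>i\<in>A. (f i a c :: complex))"
proof -
  have "(\<Sum>i\<in>A. \<Sum>a\<in>B. \<Sum>c\<in>C. f i a c) = (\<Sum>a\<in>B. \<Sum>i\<in>A. \<Sum>c\<in>C. f i a c)" by (rule sum.swap)
  also have "\<dots> = (\<Sum>a\<in>B. \<Sum>c\<in>C. \<Sum>i\<in>A. f i a c)" by (rule sum.cong[OF refl], rule sum.swap)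
  finally show ?thesis .
qed

lemma ptrace_L1:
  assumes Y: "Y \<in> carrier_mat (M*N) (M*N)" and U: "U \<in> carrier_mat M M" and UU: "dagger U * U = 1\<^sub>m M"
  shows "ptrace_A M N (kron U (1\<^sub>m N) * Y * kron (dagger U) (1\<^sub>m N)) = ptrace_A M N Y"
proof (rule eq_matI)
  fix k l assume "k < dim_row (ptrace_A M N Y)" "l < dim_col (ptrace_A M N Y)"
  hence k: "k < N" and l: "l < N" by auto
  have KY: "kron U (1\<^sub>m N) * Y \<in> carrier_mat (M*N) (M*N)" using Y U by auto
  have dU: "dagger U \<in> carrier_mat M M" using U by simp
  have "ptrace_A M N (kron U (1\<^sub>m N) * Y * kron (dagger U) (1\<^sub>m N)) $$ (k,l)
     = (\<Sum>i<M. (kron U (1\<^sub>m N) * Y * kron (dagger U) (1\<^sub>m N)) $$ (i*N+k, i*N+l))"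
    using k l by (simp add: ptrace_index)
  also have "\<dots> = (\<Sum>i<M. \<Sum>a<M. \<Sum>b<N. (kron U (1\<^sub>m N) * Y) $$ (i*N+k, a*N+b) * dagger U $$ (a,i) * 1\<^sub>m N $$ (b,l))"
    using KY dU k l idx_lt by (intro sum.cong refl kron_mult_right_index) auto
  also have "\<dots> = (\<Sum>i<M. \<Sum>a<M. (\<Sum>c<M. U $$ (i,c) * Y $$ (c*N+k, a*N+l)) * cnj (U $$ (i,a)))"
  proof (rule sum.cong[OF refl], rule sum.cong[OF refl])
    fix i a assume i: "i \<in> {..<M}" and a: "a \<in> {..<M}"
    have "(\<Sum>b<N. (kron U (1\<^sub>m N) * Y) $$ (i*N+k, a*N+b) * dagger U $$ (a,i) * 1\<^sub>m N $$ (b,l))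
       = (\<Sum>b<N. 1\<^sub>m N $$ (b,l) * ((kron U (1\<^sub>m N) * Y) $$ (i*N+k, a*N+b) * dagger U $$ (a,i)))"
      by (simp add: mult_ac)
    also have "\<dots> = (kron U (1\<^sub>m N) * Y) $$ (i*N+k, a*N+l) * dagger U $$ (a,i)"
      using l by (intro one_delta1) simp
    also have "(kron U (1\<^sub>m N) * Y) $$ (i*N+k, a*N+l) = (\<Sum>c<M. \<Sum>d<N. U $$ (i,c) * 1\<^sub>m N $$ (k,d) * Y $$ (c*N+d, a*N+l))"
      using Y U i a k l idx_lt by (intro kron_mult_left_index) auto
    also have "\<dots> = (\<Sum>c<M. U $$ (i,c) * Y $$ (c*N+k, a*N+l))"
    proof (rule sum.cong[OF refl])
      fix c assume c: "c \<in> {..<M}"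
      have "(\<Sum>d<N. U $$ (i,c) * 1\<^sub>m N $$ (k,d) * Y $$ (c*N+d, a*N+l)) = (\<Sum>d<N. 1\<^sub>m N $$ (k,d) * (U $$ (i,c) * Y $$ (c*N+d, a*N+l)))"
        by (simp add: mult_ac)
      also have "\<dots> = U $$ (i,c) * Y $$ (c*N+k, a*N+l)"
        using k by (intro one_delta2) simp
      finally show "(\<Sum>d<N. U $$ (i,c) * 1\<^sub>m N $$ (k,d) * Y $$ (c*N+d, a*N+l)) = U $$ (i,c) * Y $$ (c*N+k, a*N+l)" .
    qed
    finally show "(\<Sum>b<N. (kron U (1\<^sub>m N) * Y) $$ (i*N+k, a*N+b) * dagger U $$ (a,i) * 1\<^sub>m N $$ (b,l))
       = (\<Sum>c<M. U $$ (i,c) * Y $$ (c*N+k, a*N+l)) * cnj (U $$ (i,a))"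
      using U i a by simp
  qed
  also have "\<dots> = (\<Sum>i<M. \<Sum>a<M. \<Sum>c<M. Y $$ (c*N+k, a*N+l) * (cnj (U $$ (i,a)) * U $$ (i,c)))"
    by (simp add: sum_distrib_left sum_distrib_right mult_ac)
  also have "\<dots> = (\<Sum>a<M. \<Sum>c<M. \<Sum>i<M. Y $$ (c*N+k, a*N+l) * (cnj (U $$ (i,a)) * U $$ (i,c)))"
    by (rule swap3)
  also have "\<dots> = (\<Sum>a<M. \<Sum>c<M. Y $$ (c*N+k, a*N+l) * (\<Sum>i<M. cnj (U $$ (i,a)) * U $$ (i,c)))"
    by (simp add: sum_distrib_left)
  also have "\<dots> = (\<Sum>a<M. \<Sum>c<M. 1\<^sub>m M $$ (c,a) * Y $$ (c*N+k, a*N+l))"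
  proof (rule sum.cong[OF refl], rule sum.cong[OF refl])
    fix a c assume "a \<in> {..<M}" "c \<in> {..<M}"
    thus "Y $$ (c*N+k, a*N+l) * (\<Sum>i<M. cnj (U $$ (i,a)) * U $$ (i,c)) = 1\<^sub>m M $$ (c,a) * Y $$ (c*N+k, a*N+l)"
      using unitary_col[OF U UU, of a c] by auto
  qed
  also have "\<dots> = (\<Sum>a<M. Y $$ (a*N+k, a*N+l))"
    by (rule sum.cong[OF refl], rule one_delta1) simp
  also have "\<dots> = ptrace_A M N Y $$ (k,l)" using k l by (simp add: ptrace_index)
  finally show "ptrace_A M N (kron U (1\<^sub>m N) * Y * kron (dagger U) (1\<^sub>m N)) $$ (k,l) = ptrace_A M N Y $$ (k,l)" .
qed auto



definition fs :: "complex mat \<Rightarrow> complex" where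
  "fs X = (\<Sum>i<dim_row X. \<Sum>j<dim_col X. X $$ (i,j) * cnj (X $$ (i,j)))"

lemma frob_fs: "frob X = sqrt (\<Sum>i<dim_row X. \<Sum>j<dim_col X. (cmod (X $$ (i,j)))\<^sup>2)"
  "complex_of_real (\<Sum>i<dim_row X. \<Sum>j<dim_col X. (cmod (X $$ (i,j)))\<^sup>2) = fs X"
  by (auto simp: frob_def fs_def of_real_sum complex_norm_square[symmetric] simp del: of_real_power)

lemma frob_eqI: "fs X = fs Y \<Longrightarrow> frob X = frob Y"
  using frob_fs[of X] frob_fs[of Y] by (metis of_real_eq_iff)

lemma fs_dagger: "fs (dagger X) = fs X"
  unfolding fs_def by (subst sum.swap) (auto intro!: sum.cong simp: mult.commute)

lemma fs_left:
  assumes X: "X \<in> carrier_mat n p" and W: "W \<in> carrier_mat n n" and WW: "dagger W * W = 1\<^sub>m n"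
  shows "fs (W * X) = fs X"
proof -
  have "fs (W * X) = (\<Sum>i<n. \<Sum>j<p. (\<Sum>k<n. W $$ (i,k) * X $$ (k,j)) * cnj (\<Sum>l<n. W $$ (i,l) * X $$ (l,j)))"
    unfolding fs_def using X W by (intro sum.cong refl) (auto simp: scalar_prod_def lessThan_atLeast0)
  also have "\<dots> = (\<Sum>i<n. \<Sum>j<p. \<Sum>k<n. \<Sum>l<n. (X $$ (k,j) * cnj (X $$ (l,j))) * (cnj (W $$ (i,l)) * W $$ (i,k)))"
    by (simp add: sum_product mult_ac)
  also have "\<dots> = (\<Sum>j<p. \<Sum>k<n. \<Sum>i<n. \<Sum>l<n. (X $$ (k,j) * cnj (X $$ (l,j))) * (cnj (W $$ (i,l)) * W $$ (i,k)))"
    by (rule swap3)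
  also have "\<dots> = (\<Sum>j<p. \<Sum>k<n. \<Sum>l<n. \<Sum>i<n. (X $$ (k,j) * cnj (X $$ (l,j))) * (cnj (W $$ (i,l)) * W $$ (i,k)))"
    by (rule sum.cong[OF refl], rule sum.cong[OF refl], rule sum.swap)
  also have "\<dots> = (\<Sum>j<p. \<Sum>k<n. \<Sum>l<n. 1\<^sub>m n $$ (l,k) * (X $$ (k,j) * cnj (X $$ (l,j))))"
  proof (rule sum.cong[OF refl], rule sum.cong[OF refl], rule sum.cong[OF refl])
    fix j k l assume "k \<in> {..<n}" "l \<in> {..<n}"
    hence kl: "k < n" "l < n" by auto
    have e: "(\<Sum>i<n. (X $$ (k,j) * cnj (X $$ (l,j))) * (cnj (W $$ (i,l)) * W $$ (i,k)))
      = (X $$ (k,j) * cnj (X $$ (l,j))) * (\<Sum>i<n. cnj (W $$ (i,l)) * W $$ (i,k))"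
      by (simp only: sum_distrib_left)
    show "(\<Sum>i<n. (X $$ (k,j) * cnj (X $$ (l,j))) * (cnj (W $$ (i,l)) * W $$ (i,k))) = 1\<^sub>m n $$ (l,k) * (X $$ (k,j) * cnj (X $$ (l,j)))"
      unfolding e unitary_col[OF W WW kl(2) kl(1)] by (simp only: mult.commute)
  qed
  also have "\<dots> = (\<Sum>j<p. \<Sum>k<n. X $$ (k,j) * cnj (X $$ (k,j)))"
    by (rule sum.cong[OF refl], rule sum.cong[OF refl], rule one_delta1) simp
  also have "\<dots> = fs X"
    unfolding fs_def using X by (simp add: sum.swap[of _ "{..<p}"])
  finally show ?thesis .
qed

lemma frob_conj:
  assumes X: "X \<in> carrier_mat n n" and W: "W \<in> carrier_mat n n" and WW: "dagger W * W = 1\<^sub>m n"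
  shows "frob (W * X * dagger W) = frob X"
proof (rule frob_eqI)
  have "fs (W * X * dagger W) = fs (dagger (W * X * dagger W))" by (simp add: fs_dagger)
  also have "dagger (W * X * dagger W) = W * (dagger X * dagger W)"
    using X W by (simp add: dagger_mult[of _ n n _ n])
  also have "fs \<dots> = fs (dagger X * dagger W)" using X W WW by (intro fs_left[of _ n n]) auto
  also have "dagger X * dagger W = dagger (W * X)" using X W by (simp add: dagger_mult[of _ n n _ n])
  also have "fs \<dots> = fs (W * X)" by (simp add: fs_dagger)
  also have "\<dots> = fs X" using X W WW by (intro fs_left) auto
  finally show "fs (W * X * dagger W) = fs X" .
qed



lemma kron_one: "N > 0 \<Longrightarrow> kron (1\<^sub>m M) (1\<^sub>m N) = 1\<^sub>m (M*N)"
proof (rule eq_matI)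
  fix i j assume N: "N > 0" and "i < dim_row (1\<^sub>m (M*N))" "j < dim_col (1\<^sub>m (M*N))"
  hence i: "i < M*N" and j: "j < M*N" by auto
  have "i div N < M" "j div N < M" "i mod N < N" "j mod N < N" using i j N
    by (auto simp: less_mult_imp_div_less)
  moreover have "(i div N = j div N \<and> i mod N = j mod N) = (i = j)"
    by (metis div_mult_mod_eq)
  ultimately show "kron (1\<^sub>m M) (1\<^sub>m N) $$ (i, j) = 1\<^sub>m (M*N) $$ (i, j)"
    using i j by (auto simp: kron_index)
qed auto

lemma cancel_left:
  fixes B C X :: "complex mat"
  assumes B: "B \<in> carrier_mat n n" and C: "C \<in> carrier_mat n n" and BC: "B * C = 1\<^sub>m n" and X: "dim_row X = n"
  shows "B * (C * X) = X"
proof -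
  have X': "X \<in> carrier_mat n (dim_col X)" using X by auto
  have "B * (C * X) = (B * C) * X" using B C X' by (simp add: assoc_mult_mat[of _ n n _ n _ "dim_col X"])
  also have "\<dots> = X" using BC by (simp add: left_mult_one_mat[OF X'])
  finally show ?thesis .
qed

lemma assoc_dims: "dim_col (A::complex mat) = dim_row B \<Longrightarrow> dim_col B = dim_row C \<Longrightarrow> A * B * C = A * (B * C)"
  by (rule assoc_mult_mat[of A "dim_row A" "dim_col A" B "dim_col B" C "dim_col C"]) auto

lemma unitary_dagger: "unitary n U \<Longrightarrow> unitary n (dagger U)"
  by (auto simp: unitary_def)

lemma main_dir:
  assumes rho: "\<rho> \<in> carrier_mat (M*N) (M*N)" and M: "M > 0" and N: "N > 0"
    and U1: "unitary M U1" and U2: "unitary N U2" and cyc: "cyclic_unitary M N \<rho> V"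
  shows "cyclic_unitary M N (kron U1 U2 * \<rho> * dagger (kron U1 U2)) (U2 * V * dagger U2) \<and>
         fu_dist M N (kron U1 U2 * \<rho> * dagger (kron U1 U2)) (U2 * V * dagger U2) = fu_dist M N \<rho> V"
proof -
  define W where "W = kron U1 U2"
  define P where "P = ptrace_A M N \<rho>"
  have U1c: "U1 \<in> carrier_mat M M" and U1a: "U1 * dagger U1 = 1\<^sub>m M" and U1b: "dagger U1 * U1 = 1\<^sub>m M"
    using U1 by (auto simp: unitary_def)
  have U2c: "U2 \<in> carrier_mat N N" and U2a: "U2 * dagger U2 = 1\<^sub>m N" and U2b: "dagger U2 * U2 = 1\<^sub>m N"
    using U2 by (auto simp: unitary_def)
  have Vc: "V \<in> carrier_mat N N" and Va: "V * dagger V = 1\<^sub>m N" and Vb: "dagger V * V = 1\<^sub>m N"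
    and PV: "P * V = V * P"
    using cyc by (auto simp: unitary_def cyclic_unitary_def P_def)
  have dU1: "dagger U1 \<in> carrier_mat M M" and dU2: "dagger U2 \<in> carrier_mat N N" and dV: "dagger V \<in> carrier_mat N N"
    using U1c U2c Vc by auto
  have Pc: "P \<in> carrier_mat N N" by (simp add: P_def)
  have Wc: "W \<in> carrier_mat (M*N) (M*N)" using U1c U2c kron_carrier[of U1 U2] by (simp add: W_def carrier_matD)
  have dW: "dagger W = kron (dagger U1) (dagger U2)" by (simp add: W_def dagger_kron)
  have dWc: "dagger W \<in> carrier_mat (M*N) (M*N)" using Wc by simp
  have WdW: "W * dagger W = 1\<^sub>m (M*N)"
    unfolding dW unfolding W_def using U1c U2c U1a U2a N by (simp add: kron_mult[of _ M M _ N N _ M _ N] kron_one)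
  have dWW: "dagger W * W = 1\<^sub>m (M*N)"
    unfolding dW unfolding W_def using U1c U2c U1b U2b N by (simp add: kron_mult[of _ M M _ N N _ M _ N] kron_one)
  define K1 where "K1 = kron U1 (1\<^sub>m N)"
  define K2 where "K2 = kron (1\<^sub>m M) U2"
  define K1' where "K1' = kron (dagger U1) (1\<^sub>m N)"
  define K2' where "K2' = kron (1\<^sub>m M) (dagger U2)"
  have K1c: "K1 \<in> carrier_mat (M*N) (M*N)" and K2c: "K2 \<in> carrier_mat (M*N) (M*N)"
    and K1'c: "K1' \<in> carrier_mat (M*N) (M*N)" and K2'c: "K2' \<in> carrier_mat (M*N) (M*N)"
    using U1c U2c by (auto simp: K1_def K2_def K1'_def K2'_def)
  have WK: "W = K1 * K2" unfolding W_def K1_def K2_def using U1c U2c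
    by (simp add: kron_mult[of _ M M _ N N _ M _ N])
  have dWK: "dagger W = K2' * K1'" unfolding dW K1'_def K2'_def using U1c U2c
    by (simp add: kron_mult[of _ M M _ N N _ M _ N])
  have rho'_eq: "W * \<rho> * dagger W = K1 * (K2 * \<rho> * K2') * K1'"
    unfolding dWK unfolding WK using K1c K2c K1'c K2'c rho by (simp add: assoc_mult_mat[of _ "M*N" "M*N" _ "M*N" _ "M*N"])
  have ptr: "ptrace_A M N (W * \<rho> * dagger W) = U2 * P * dagger U2"
  proof -
    have Y: "kron (1\<^sub>m M) U2 * \<rho> * kron (1\<^sub>m M) (dagger U2) \<in> carrier_mat (M*N) (M*N)"
      using K2c K2'c rho unfolding K2_def K2'_def by simp
    show ?thesis using ptrace_L1[OF Y U1c U1b] ptrace_L2[OF rho U2c dU2]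
      by (simp add: rho'_eq K1_def K1'_def K2_def K2'_def P_def)
  qed
  define V' where "V' = U2 * V * dagger U2"
  have V'c: "V' \<in> carrier_mat N N" unfolding V'_def by (rule mult_carrier_mat[OF mult_carrier_mat[OF U2c Vc] dU2])
  have dV': "dagger V' = U2 * dagger V * dagger U2"
    unfolding V'_def using U2c Vc dU2 dV
    by (simp add: dagger_mult[of _ N N _ N] assoc_mult_mat[of _ N N _ N _ N])
  have canc2: "\<And>X. dim_row X = N \<Longrightarrow> dagger U2 * (U2 * X) = X"
    using cancel_left[OF dU2 U2c U2b] by blast
  have canc2': "\<And>X. dim_row X = N \<Longrightarrow> U2 * (dagger U2 * X) = X"
    using cancel_left[OF U2c dU2 U2a] by blast
  have cancV: "\<And>X. dim_row X = N \<Longrightarrow> V * (dagger V * X) = X"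
    using cancel_left[OF Vc dV Va] by blast
  have cancV': "\<And>X. dim_row X = N \<Longrightarrow> dagger V * (V * X) = X"
    using cancel_left[OF dV Vc Vb] by blast
  have dims: "dim_row U2 = N" "dim_col U2 = N" "dim_row V = N" "dim_col V = N"
    using U2c Vc by auto
  have uV': "unitary N V'"
    unfolding unitary_def dV' using V'c U2c Vc dU2 dV U2a U2b
    by (simp add: V'_def assoc_dims dims canc2 canc2' cancV cancV')
  have PV2: "P * (V * X) = V * (P * X)" if "dim_row X = N" for X
  proof -
    have X: "X \<in> carrier_mat N (dim_col X)" using that by auto
    have "P * (V * X) = (P * V) * X" using assoc_mult_mat[OF Pc Vc X] by simp
    also have "\<dots> = (V * P) * X" using PV by simp
    also have "\<dots> = V * (P * X)" using assoc_mult_mat[OF Vc Pc X] by simp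
    finally show ?thesis .
  qed
  have Pd: "dim_row P = N" "dim_col P = N" by (auto simp: P_def)
  have comm: "ptrace_A M N (W * \<rho> * dagger W) * V' = V' * ptrace_A M N (W * \<rho> * dagger W)"
    unfolding ptr V'_def using U2c Vc dU2 Pc
    by (simp add: assoc_dims dims Pd canc2 PV2)
  have cyc': "cyclic_unitary M N (W * \<rho> * dagger W) V'"
    using uV' comm by (simp add: cyclic_unitary_def)
  define K where "K = kron (1\<^sub>m M) V"
  have Kc: "K \<in> carrier_mat (M*N) (M*N)" using Vc kron_carrier[of "1\<^sub>m M" V] by (simp add: K_def carrier_matD)
  have dKc: "dagger K \<in> carrier_mat (M*N) (M*N)" using Kc by simp
  have K': "kron (1\<^sub>m M) V' = W * K * dagger W"
  proof -
    have "W * K = kron U1 (U2 * V)" unfolding W_def K_def using U1c U2c Vc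
      by (simp add: kron_mult[of _ M M _ N N _ M _ N])
    also have "\<dots> * dagger W = kron (U1 * dagger U1) (U2 * V * dagger U2)" unfolding dW using U1c U2c Vc
      by (simp add: kron_mult[of _ M M _ N N _ M _ N])
    finally show ?thesis using U1a by (simp add: V'_def)
  qed
  have dimsW: "dim_row W = M*N" "dim_col W = M*N" "dim_row K = M*N" "dim_col K = M*N"
    "dim_row \<rho> = M*N" "dim_col \<rho> = M*N" using Wc Kc rho by auto
  have dK': "dagger (kron (1\<^sub>m M) V') = W * dagger K * dagger W"
    unfolding K' using Wc Kc dWc
    by (simp add: dagger_mult[of _ "M*N" "M*N" _ "M*N"] assoc_dims dimsW)
  have cancW: "\<And>X. dim_row X = M*N \<Longrightarrow> dagger W * (W * X) = X"
    using cancel_left[OF dWc Wc dWW] by blast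
  have diff: "W * \<rho> * dagger W - kron (1\<^sub>m M) V' * (W * \<rho> * dagger W) * dagger (kron (1\<^sub>m M) V')
      = W * (\<rho> - K * \<rho> * dagger K) * dagger W"
  proof -
    have "kron (1\<^sub>m M) V' * (W * \<rho> * dagger W) * dagger (kron (1\<^sub>m M) V') = W * (K * \<rho> * dagger K) * dagger W"
      unfolding dK' unfolding K' using Wc Kc dWc dKc rho
      by (simp add: assoc_dims dimsW cancW)
    moreover have "W * (\<rho> - K * \<rho> * dagger K) * dagger W = W * \<rho> * dagger W - W * (K * \<rho> * dagger K) * dagger W"
    proof -
      have Zc: "K * \<rho> * dagger K \<in> carrier_mat (M*N) (M*N)" using Kc rho dKc by auto
      have WZ: "W * (K * \<rho> * dagger K) \<in> carrier_mat (M*N) (M*N)" using Wc Zc by auto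
      have Wr: "W * \<rho> \<in> carrier_mat (M*N) (M*N)" using Wc rho by auto
      show ?thesis
        unfolding mult_minus_distrib_mat[OF Wc rho Zc] minus_mult_distrib_mat[OF Wr WZ dWc] ..
    qed
    ultimately show ?thesis by simp
  qed
  have Dc: "\<rho> - K * \<rho> * dagger K \<in> carrier_mat (M*N) (M*N)" using rho Kc dKc by auto
  have fu: "fu_dist M N (W * \<rho> * dagger W) V' = fu_dist M N \<rho> V"
    unfolding fu_dist_def Let_def diff K_def[symmetric] frob_conj[OF Dc Wc dWW] ..
  show ?thesis using cyc' fu by (simp add: W_def V'_def)
qed

lemma conj_back:
  assumes rho: "\<rho> \<in> carrier_mat (M*N) (M*N)" and N: "N > 0"
    and U1: "unitary M U1" and U2: "unitary N U2"
  shows "kron (dagger U1) (dagger U2) * (kron U1 U2 * \<rho> * dagger (kron U1 U2)) * dagger (kron (dagger U1) (dagger U2)) = \<rho>"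
proof -
  have U1c: "U1 \<in> carrier_mat M M" and U1b: "dagger U1 * U1 = 1\<^sub>m M"
    using U1 by (auto simp: unitary_def)
  have U2c: "U2 \<in> carrier_mat N N" and U2b: "dagger U2 * U2 = 1\<^sub>m N"
    using U2 by (auto simp: unitary_def)
  define W where "W = kron U1 U2"
  define D where "D = kron (dagger U1) (dagger U2)"
  have dD: "dagger D = W" by (simp add: D_def W_def dagger_kron)
  have dW: "dagger W = D" by (simp add: D_def W_def dagger_kron)
  have DW: "D * W = 1\<^sub>m (M*N)"
    unfolding D_def W_def using U1c U2c U1b U2b N by (simp add: kron_mult[of _ M M _ N N _ M _ N] kron_one)
  have dims: "dim_row W = M*N" "dim_col W = M*N" "dim_row D = M*N" "dim_col D = M*N"
    "dim_row \<rho> = M*N" "dim_col \<rho> = M*N"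
    using U1c U2c rho by (auto simp: D_def W_def)
  have "D * (W * \<rho> * D) * W = (D * W) * \<rho> * (D * W)"
    by (simp add: assoc_dims dims)
  also have "\<dots> = \<rho>" using DW rho by simp
  finally have "D * (W * \<rho> * D) * W = \<rho>" .
  thus ?thesis using dW dD by (simp only: W_def D_def)
qed


theorem lemma2:
  fixes M N :: nat and \<rho> U1 U2 :: "complex mat"
  assumes "is_state M N \<rho>" and "unitary M U1" and "unitary N U2"
  shows "d_max M N (kron U1 U2 * \<rho> * dagger (kron U1 U2)) = d_max M N \<rho>"
proof -
  have rho: "\<rho> \<in> carrier_mat (M*N) (M*N)" and tr1: "tr \<rho> = 1"
    using assms(1) by (auto simp: is_state_def)
  have MN: "M*N > 0"
  proof (rule ccontr)
    assume "\<not> M*N > 0"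
    hence "dim_row \<rho> = 0" using rho by auto
    hence "tr \<rho> = 0" by (simp add: tr_def)
    thus False using tr1 by simp
  qed
  hence M: "M > 0" and N: "N > 0" by auto
  define rhoP where "rhoP = kron U1 U2 * \<rho> * dagger (kron U1 U2)"
  have U1c: "U1 \<in> carrier_mat M M" and U2c: "U2 \<in> carrier_mat N N"
    using assms(2,3) by (auto simp: unitary_def)
  have rho': "rhoP \<in> carrier_mat (M*N) (M*N)"
    unfolding rhoP_def using rho U1c U2c kron_carrier[of U1 U2]
    by (auto simp: carrier_matD intro!: mult_carrier_mat[of _ "M*N" "M*N"])
  have hback: "kron (dagger U1) (dagger U2) * rhoP * dagger (kron (dagger U1) (dagger U2)) = \<rho>"
    unfolding rhoP_def by (rule conj_back[OF rho N assms(2,3)])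
  have "{fu_dist M N rhoP UB | UB. cyclic_unitary M N rhoP UB} = {fu_dist M N \<rho> UB | UB. cyclic_unitary M N \<rho> UB}"
  proof (intro equalityI subsetI)
    fix x assume "x \<in> {fu_dist M N rhoP UB | UB. cyclic_unitary M N rhoP UB}"
    then obtain V' where x: "x = fu_dist M N rhoP V'" and c: "cyclic_unitary M N rhoP V'" by auto
    from main_dir[OF rho' M N unitary_dagger[OF assms(2)] unitary_dagger[OF assms(3)] c]
    have "cyclic_unitary M N \<rho> (dagger U2 * V' * dagger (dagger U2)) \<and> fu_dist M N \<rho> (dagger U2 * V' * dagger (dagger U2)) = x"
      unfolding hback x by simp
    thus "x \<in> {fu_dist M N \<rho> UB | UB. cyclic_unitary M N \<rho> UB}" by blast
  next
    fix x assume "x \<in> {fu_dist M N \<rho> UB | UB. cyclic_unitary M N \<rho> UB}"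
    then obtain V where x: "x = fu_dist M N \<rho> V" and c: "cyclic_unitary M N \<rho> V" by auto
    from main_dir[OF rho M N assms(2,3) c]
    have "cyclic_unitary M N rhoP (U2 * V * dagger U2) \<and> fu_dist M N rhoP (U2 * V * dagger U2) = x"
      unfolding rhoP_def x by simp
    thus "x \<in> {fu_dist M N rhoP UB | UB. cyclic_unitary M N rhoP UB}" by blast
  qed
  thus ?thesis unfolding d_max_def rhoP_def by simp
qed

end
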